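(* Let $G$ be a cubic graph, let $M$ be a perfect matching cut of $G$, and let $C$ be a $6$-vertex cycle of $G$. If at least three outgoing edges of $V(C)$ belong to $M$, then all outgoing edges of $V(C)$ belong to $M$.
   Context: All graphs are finite, simple and undirected; a graph is cubic if every vertex has exactly three neighbours. A cutset of $G$ is a set $M \subseteq E(G)$ for which there is a bipartition $X \uplus Y = V(G)$ into two nonempty sets such that $M$ is exactly the set of edges with one endpoint in $X$ and one in $Y$. A perfect matching cut is a perfect matching (a set of edges covering every vertex exactly once) that is also a cutset. For $U \subseteq V(G)$, the outgoing edges of $U$ are the edges of $G$ with exactly one endpoint in $U$. *)

theory Defs
  imports Main
begin

definition simple_graph :: "'a set \<Rightarrow> 'a set set \<Rightarrow> bool" where
  "simple_graph V E \<longleftrightarrow> finite V \<and> (\<forall>e\<in>E. e \<subseteq> V \<and> card e = 2)"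

definition cubic :: "'a set \<Rightarrow> 'a set set \<Rightarrow> bool" where
  "cubic V E \<longleftrightarrow> simple_graph V E \<and> (\<forall>v\<in>V. card {e\<in>E. v \<in> e} = 3)"

definition perfect_matching :: "'a set \<Rightarrow> 'a set set \<Rightarrow> 'a set set \<Rightarrow> bool" where
  "perfect_matching V E M \<longleftrightarrow> M \<subseteq> E \<and> (\<forall>v\<in>V. \<exists>!e. e \<in> M \<and> v \<in> e)"

definition outgoing :: "'a set set \<Rightarrow> 'a set \<Rightarrow> 'a set set" where
  "outgoing E U = {e\<in>E. card (e \<inter> U) = 1}"

definition cutset :: "'a set \<Rightarrow> 'a set set \<Rightarrow> 'a set set \<Rightarrow> bool" where
  "cutset V E M \<longleftrightarrow> (\<exists>X Y. X \<noteq> {} \<and> Y \<noteq> {} \<and> X \<inter> Y = {} \<and> X \<union> Y = V \<and>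
      M = {e\<in>E. e \<inter> X \<noteq> {} \<and> e \<inter> Y \<noteq> {}})"

definition perfect_matching_cut :: "'a set \<Rightarrow> 'a set set \<Rightarrow> 'a set set \<Rightarrow> bool" where
  "perfect_matching_cut V E M \<longleftrightarrow> perfect_matching V E M \<and> cutset V E M"

definition is_cycle :: "'a set \<Rightarrow> 'a set set \<Rightarrow> nat \<Rightarrow> (nat \<Rightarrow> 'a) \<Rightarrow> bool" where
  "is_cycle V E k c \<longleftrightarrow> 3 \<le> k \<and> inj_on c {0..<k} \<and> c ` {0..<k} \<subseteq> V \<and>
     (\<forall>i<k. {c i, c ((i + 1) mod k)} \<in> E)"

end

theory Submission
  imports Defs
begin

lemma bool6b: fixes b0 b1 b2 b3 b4 b5 :: bool
  assumes "b0 = b1 \<or> b5 = b0" "b1 = b2 \<or> b0 = b1" "b2 = b3 \<or> b1 = b2" "b3 = b4 \<or> b2 = b3"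
    "b4 = b5 \<or> b3 = b4" "b5 = b0 \<or> b4 = b5" "\<not> (b0 = b1 \<and> b1 = b2 \<and> b2 = b3 \<and> b3 = b4 \<and> b4 = b5)"
  shows "\<exists>(a::nat) (b::nat). ((b0 = b1 \<and> b5 = b0) \<longrightarrow> 0 = a \<or> 0 = b) \<and> ((b1 = b2 \<and> b0 = b1) \<longrightarrow> 1 = a \<or> 1 = b)
    \<and> ((b2 = b3 \<and> b1 = b2) \<longrightarrow> 2 = a \<or> 2 = b) \<and> ((b3 = b4 \<and> b2 = b3) \<longrightarrow> 3 = a \<or> 3 = b)
    \<and> ((b4 = b5 \<and> b3 = b4) \<longrightarrow> 4 = a \<or> 4 = b) \<and> ((b5 = b0 \<and> b4 = b5) \<longrightarrow> 5 = a \<or> 5 = b)"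
  using assms
  by (cases b0; cases b1; cases b2; cases b3; cases b4; cases b5; simp; blast)

lemma idx6: "(i::nat) < 6 \<Longrightarrow> i = 0 \<or> i = 1 \<or> i = 2 \<or> i = 3 \<or> i = 4 \<or> i = 5"
  by auto

lemma modfacts: "(i::nat) < 6 \<Longrightarrow> Suc i mod 6 < 6 \<and> (i+5) mod 6 < 6 \<and> Suc i mod 6 \<noteq> i \<and>
   (i+5) mod 6 \<noteq> i \<and> Suc i mod 6 \<noteq> (i+5) mod 6 \<and> Suc ((i+5) mod 6) mod 6 = i"
  by (drule idx6) (elim disjE; simp)

theorem lemma5:
  fixes V :: "'a set" and E M :: "'a set set" and c :: "nat \<Rightarrow> 'a"
  assumes "cubic V E"
    and "perfect_matching_cut V E M"
    and "is_cycle V E 6 c"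
    and "card (outgoing E (c ` {0..<6}) \<inter> M) \<ge> 3"
  shows "outgoing E (c ` {0..<6}) \<subseteq> M"
proof -
  define C where "C = c ` {0..<6}"
  define nx where "nx i = Suc i mod 6" for i :: nat
  define pv where "pv i = (i+5) mod 6" for i :: nat
  have mf: "\<And>i. i < 6 \<Longrightarrow> nx i < 6 \<and> pv i < 6 \<and> nx i \<noteq> i \<and> pv i \<noteq> i \<and> nx i \<noteq> pv i \<and> nx (pv i) = i"
    unfolding nx_def pv_def using modfacts by blast
  from assms(2) obtain X Y where XY: "X \<noteq> {}" "Y \<noteq> {}" "X \<inter> Y = {}" "X \<union> Y = V"
     and Mdef: "M = {e\<in>E. e \<inter> X \<noteq> {} \<and> e \<inter> Y \<noteq> {}}"
    unfolding perfect_matching_cut_def cutset_def by blast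
  have pm: "M \<subseteq> E" "\<And>v. v \<in> V \<Longrightarrow> \<exists>!e. e \<in> M \<and> v \<in> e"
    using assms(2) unfolding perfect_matching_cut_def perfect_matching_def by auto
  have inj: "inj_on c {0..<6}" and cV: "\<And>i. i < 6 \<Longrightarrow> c i \<in> V"
    and cE: "\<And>i. i < 6 \<Longrightarrow> {c i, c (nx i)} \<in> E"
    using assms(3) unfolding is_cycle_def nx_def by auto
  have ceq: "\<And>i j. i < 6 \<Longrightarrow> j < 6 \<Longrightarrow> c i = c j \<longleftrightarrow> i = j"
    using inj by (auto dest: inj_onD)
  have cC: "\<And>i. i < 6 \<Longrightarrow> c i \<in> C" unfolding C_def by auto
  define s where "s i = (c i \<in> X)" for i
  have inM: "\<And>i. i < 6 \<Longrightarrow> {c i, c (nx i)} \<in> M \<longleftrightarrow> s i \<noteq> s (nx i)"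
  proof -
    fix i :: nat assume i: "i < 6"
    have a: "c i \<in> V" "c (nx i) \<in> V" using cV mf i by auto
    show "{c i, c (nx i)} \<in> M \<longleftrightarrow> s i \<noteq> s (nx i)"
      unfolding Mdef s_def using cE[OF i] a XY by auto
  qed
  have uniq: "\<And>v e1 e2. v \<in> V \<Longrightarrow> e1 \<in> M \<Longrightarrow> e2 \<in> M \<Longrightarrow> v \<in> e1 \<Longrightarrow> v \<in> e2 \<Longrightarrow> e1 = e2"
    using pm(2) by blast
  have constr: "\<And>i. i < 6 \<Longrightarrow> s i = s (nx i) \<or> s (pv i) = s i"
  proof (rule ccontr)
    fix i :: nat assume i: "i < 6" and h: "\<not> (s i = s (nx i) \<or> s (pv i) = s i)"
    have m1: "{c i, c (nx i)} \<in> M" using inM i h by auto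
    have m2: "{c (pv i), c i} \<in> M" using inM[of "pv i"] mf[OF i] h by auto
    have "{c i, c (nx i)} = {c (pv i), c i}" using uniq[OF cV[OF i] m1 m2] by auto
    hence "c (nx i) = c (pv i)" by (auto simp: doubleton_eq_iff)
    thus False using ceq mf[OF i] by auto
  qed
  have cyc2: "\<And>i. i < 6 \<Longrightarrow> card ({c i, c (nx i)} \<inter> C) = 2"
  proof -
    fix i :: nat assume i: "i < 6"
    have "{c i, c (nx i)} \<inter> C = {c i, c (nx i)}" using cC i mf by auto
    thus "card ({c i, c (nx i)} \<inter> C) = 2" using ceq[of i "nx i"] mf[OF i] i by auto
  qed
  have outC: "\<And>e. e \<in> outgoing E C \<Longrightarrow> \<exists>i<6. c i \<in> e"
  proof -
    fix e assume "e \<in> outgoing E C"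
    hence "card (e \<inter> C) = 1" unfolding outgoing_def by auto
    then obtain x where "e \<inter> C = {x}" using card_1_singletonE by blast
    hence "x \<in> e" "x \<in> c ` {0..<6}" unfolding C_def by auto
    thus "\<exists>i<6. c i \<in> e" by auto
  qed
  have notcyc: "\<And>e i. e \<in> outgoing E C \<Longrightarrow> i < 6 \<Longrightarrow> e \<noteq> {c i, c (nx i)}"
    using cyc2 unfolding outgoing_def by auto
  have good: "\<And>e i. e \<in> outgoing E C \<Longrightarrow> e \<in> M \<Longrightarrow> i < 6 \<Longrightarrow> c i \<in> e \<Longrightarrow>
      s i = s (nx i) \<and> s (pv i) = s i"
  proof -
    fix e i assume e: "e \<in> outgoing E C" "e \<in> M" and i: "i < 6" "c i \<in> e"
    have 1: "{c i, c (nx i)} \<notin> M"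
      using uniq[OF cV[OF i(1)] e(2) _ i(2)] notcyc[OF e(1) i(1)] by blast
    have 2: "{c (pv i), c i} \<notin> M"
      using uniq[OF cV[OF i(1)] e(2) _ i(2)] notcyc[OF e(1), of "pv i"] mf[OF i(1)] by auto
    show "s i = s (nx i) \<and> s (pv i) = s i" using 1 2 inM[OF i(1)] inM[of "pv i"] mf[OF i(1)] by auto
  qed
  show ?thesis
  proof (cases "\<forall>i<6. s i = s 0")
    case True
    show ?thesis unfolding C_def[symmetric]
    proof
      fix e assume e: "e \<in> outgoing E C"
      then obtain i where i: "i < 6" "c i \<in> e" using outC by blast
      obtain m where m: "m \<in> M" "c i \<in> m" using pm(2)[OF cV[OF i(1)]] by blast
      have sv: "s i = s 0" "s (nx i) = s 0" "s (pv i) = s 0"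
        using True[rule_format, OF i(1)] True[rule_format, of "nx i"] True[rule_format, of "pv i"] mf[OF i(1)]
        by simp_all
      have n1: "{c i, c (nx i)} \<notin> M" using inM[OF i(1)] sv by simp
      have n2: "{c (pv i), c i} \<notin> M" using inM[of "pv i"] sv mf[OF i(1)] by simp
      define Ei where "Ei = {f\<in>E. c i \<in> f}"
      have c3: "card Ei = 3" using assms(1) cV[OF i(1)] unfolding cubic_def Ei_def by auto
      hence fin: "finite Ei" by (metis card.infinite zero_neq_numeral)
      have eE: "e \<in> E" using e unfolding outgoing_def by auto
      have sub: "{e, {c i, c (nx i)}, {c (pv i), c i}} \<subseteq> Ei"
        unfolding Ei_def using eE cE[OF i(1)] cE[of "pv i"] i mf[OF i(1)] by auto
      have d1: "e \<noteq> {c i, c (nx i)}" using notcyc e i by blast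
      have d2: "e \<noteq> {c (pv i), c i}" using notcyc[OF e, of "pv i"] mf[OF i(1)] by auto
      have d3: "{c i, c (nx i)} \<noteq> {c (pv i), c i}"
        using ceq[of "nx i" "pv i"] ceq[of i "pv i"] mf[OF i(1)] i by (auto simp: doubleton_eq_iff)
      have "card {e, {c i, c (nx i)}, {c (pv i), c i}} = 3" using d1 d2 d3 by auto
      hence "{e, {c i, c (nx i)}, {c (pv i), c i}} = Ei" using card_subset_eq[OF fin sub] c3 by auto
      moreover have "m \<in> Ei" unfolding Ei_def using m pm(1) by auto
      ultimately have "m = e" using m n1 n2 by auto
      thus "e \<in> M" using m by simp
    qed
  next
    case False
    have ex: "\<And>P. (\<forall>i<6::nat. P i) = (P 0 \<and> P 1 \<and> P 2 \<and> P 3 \<and> P 4 \<and> P 5)"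
      by (auto dest: idx6)
    have nxv: "nx 0 = 1" "nx 1 = 2" "nx 2 = 3" "nx 3 = 4" "nx 4 = 5" "nx 5 = 0"
      "pv 0 = 5" "pv 1 = 0" "pv 2 = 1" "pv 3 = 2" "pv 4 = 3" "pv 5 = 4"
      unfolding nx_def pv_def by auto
    have c0: "s 0 = s 1 \<or> s 5 = s 0" using constr[of 0] nxv by simp
    have c1: "s 1 = s 2 \<or> s 0 = s 1" using constr[of 1] nxv by simp
    have c2: "s 2 = s 3 \<or> s 1 = s 2" using constr[of 2] nxv by simp
    have c3: "s 3 = s 4 \<or> s 2 = s 3" using constr[of 3] nxv by simp
    have c4: "s 4 = s 5 \<or> s 3 = s 4" using constr[of 4] nxv by simp
    have c5: "s 5 = s 0 \<or> s 4 = s 5" using constr[of 5] nxv by simp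
    have nc: "\<not> (s 0 = s 1 \<and> s 1 = s 2 \<and> s 2 = s 3 \<and> s 3 = s 4 \<and> s 4 = s 5)"
    proof
      assume h: "s 0 = s 1 \<and> s 1 = s 2 \<and> s 2 = s 3 \<and> s 3 = s 4 \<and> s 4 = s 5"
      from False obtain k where k: "k < 6" "s k \<noteq> s 0" by blast
      from idx6[OF k(1)] show False using h k(2) by (elim disjE) simp_all
    qed
    obtain a b :: nat where ab0: "((s 0 = s 1 \<and> s 5 = s 0) \<longrightarrow> 0 = a \<or> 0 = b) \<and> ((s 1 = s 2 \<and> s 0 = s 1) \<longrightarrow> 1 = a \<or> 1 = b)
    \<and> ((s 2 = s 3 \<and> s 1 = s 2) \<longrightarrow> 2 = a \<or> 2 = b) \<and> ((s 3 = s 4 \<and> s 2 = s 3) \<longrightarrow> 3 = a \<or> 3 = b)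
    \<and> ((s 4 = s 5 \<and> s 3 = s 4) \<longrightarrow> 4 = a \<or> 4 = b) \<and> ((s 5 = s 0 \<and> s 4 = s 5) \<longrightarrow> 5 = a \<or> 5 = b)"
      using bool6b[OF c0 c1 c2 c3 c4 c5 nc] by (elim exE) (rule that)
    have ab: "\<forall>i<6. (s i = s (nx i) \<and> s (pv i) = s i) \<longrightarrow> i = a \<or> i = b"
    proof (intro allI impI)
      fix i :: nat assume i: "i < 6" "s i = s (nx i) \<and> s (pv i) = s i"
      from idx6[OF i(1)] show "i = a \<or> i = b" using i(2) ab0 nxv by (elim disjE) simp_all
    qed
    have sub2: "outgoing E C \<inter> M \<subseteq> {e. e \<in> M \<and> a < 6 \<and> c a \<in> e} \<union> {e. e \<in> M \<and> b < 6 \<and> c b \<in> e}"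
    proof
      fix e assume e: "e \<in> outgoing E C \<inter> M"
      then obtain i where i: "i < 6" "c i \<in> e" using outC by blast
      have "i = a \<or> i = b" using ab good[of e i] e i by blast
      thus "e \<in> {e. e \<in> M \<and> a < 6 \<and> c a \<in> e} \<union> {e. e \<in> M \<and> b < 6 \<and> c b \<in> e}" using e i by auto
    qed
    have sg: "\<And>x. \<exists>f. {e. e \<in> M \<and> x < 6 \<and> c x \<in> e} \<subseteq> {f}"
    proof -
      fix x
      show "\<exists>f. {e. e \<in> M \<and> x < 6 \<and> c x \<in> e} \<subseteq> {f}"
      proof (cases "x < 6")
        case True
        then obtain f where "f \<in> M" "c x \<in> f" using pm(2)[OF cV[OF True]] by blast
        then show ?thesis using uniq cV[OF True] by blast
      qed auto
    qed
    obtain fa where fa: "{e. e \<in> M \<and> a < 6 \<and> c a \<in> e} \<subseteq> {fa}" using sg[of a] by blast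
    obtain fb where fb: "{e. e \<in> M \<and> b < 6 \<and> c b \<in> e} \<subseteq> {fb}" using sg[of b] by blast
    have "outgoing E C \<inter> M \<subseteq> {fa, fb}" using sub2 fa fb by blast
    hence "card (outgoing E C \<inter> M) \<le> card {fa, fb}" by (intro card_mono) auto
    also have "\<dots> \<le> 2" by (simp add: card_insert_le_m1)
    finally show ?thesis using assms(4) unfolding C_def by simp
  qed
qed

end
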